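(* Let $d\geq 2$ and let $g:[-1,1]\to(-\infty,\infty]$ be a function that is finite and continuous on $[-1,1)$, differentiable on $(-1,1)$, with $g(1)=\lim_{t\to1^-}g(t)$, and such that $g''$ exists and is convex on $(-1,1)$. Let $\widetilde\omega_{2d}=\{\pm\mathbf e_1,\ldots,\pm\mathbf e_d\}$, where $\mathbf e_1,\dots,\mathbf e_d$ is the standard basis of $\mathbb R^d$. Then the potential $$p^g(\widetilde\omega_{2d},\mathbf x):=\sum_{\mathbf y\in\widetilde\omega_{2d}}g(\mathbf x\cdot\mathbf y)$$ attains its absolute minimum over $S^{d-1}$ at every point of $S^{d-1}$ each of whose coordinates equals $1/\sqrt d$ or $-1/\sqrt d$. Furthermore, $$P^g(\widetilde\omega_{2d},S^{d-1}):=\min_{\mathbf x\in S^{d-1}}p^g(\widetilde\omega_{2d},\mathbf x)=d\left(g\left(\tfrac1{\sqrt d}\right)+g\left(-\tfrac1{\sqrt d}\right)\right).$$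
   Context: $S^{d-1}$ is the unit sphere in $\mathbb R^d$. *)

theory Defs
  imports "HOL-Analysis.Analysis" "HOL-Library.Extended_Real"
begin

definition cross_polytope :: "(real ^ 'n) set" where
  "cross_polytope = {axis i 1 | i. True} \<union> {axis i (-1) | i. True}"

definition potential :: "(real \<Rightarrow> ereal) \<Rightarrow> (real ^ 'n) set \<Rightarrow> real ^ 'n \<Rightarrow> ereal" where
  "potential g \<omega> x = (\<Sum>y\<in>\<omega>. g (x \<bullet> y))"

end

theory Submission
  imports Defs
begin

lemma key_real:
  fixes G g' g'' :: "real \<Rightarrow> real" and a :: real
  assumes D: "\<forall>t\<in>{-1<..<1}. (G has_real_derivative g' t) (at t) \<and> (g' has_real_derivative g'' t) (at t)"
    and conv: "convex_on {-1<..<1} g''"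
    and a0: "0 < a" and a1: "a < 1"
  shows "\<forall>t\<in>{-1<..<1}. G t + G (-t) \<ge> (G a + G (-a)) + (g' a - g' (-a)) / (2*a) * (t^2 - a^2)"
proof -
  define H where "H t = G t + G (-t)" for t
  define H' where "H' t = g' t - g' (-t)" for t
  define H'' where "H'' t = g'' t + g'' (-t)" for t
  have dH: "(H has_real_derivative H' t) (at t)" if "t \<in> {-1<..<1}" for t
  proof -
    have "-t \<in> {-1<..<1}" using that by auto
    then have "((\<lambda>x. G (-x)) has_real_derivative - g' (-t)) (at t)"
      using D DERIV_mirror[where f=G and x=t and y="g' (-t)"] by auto
    then show ?thesis unfolding H_def[abs_def] H'_def using D that
      by (auto intro!: derivative_eq_intros)
  qed
  have dH': "(H' has_real_derivative H'' t) (at t)" if "t \<in> {-1<..<1}" for t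
  proof -
    have "-t \<in> {-1<..<1}" using that by auto
    then have "((\<lambda>x. g' (-x)) has_real_derivative - g'' (-t)) (at t)"
      using D DERIV_mirror[where f="g'" and x=t and y="g'' (-t)"] by auto
    then show ?thesis unfolding H'_def[abs_def] H''_def using D that
      by (auto intro!: derivative_eq_intros)
  qed
  have mono: "H'' t \<le> H'' s" if "0 \<le> t" "t \<le> s" "s < 1" for t s
  proof (cases "t = s")
    case True then show ?thesis by simp
  next
    case False
    then have s0: "s > 0" using that by auto
    define lam where "lam = (s + t) / (2 * s)"
    have lam0: "0 \<le> lam" "lam \<le> 1" using that s0 by (auto simp: lam_def field_simps)
    have e1: "t = lam * s + (1 - lam) * (-s)" using s0 by (simp add: lam_def field_simps)
    have e2: "-t = (1 - lam) * s + lam * (-s)" using s0 by (simp add: lam_def field_simps)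
    have ins: "s \<in> {-1<..<1}" "-s \<in> {-1<..<1}" using that s0 by auto
    have c1: "g'' (lam * s + (1 - lam) * (-s)) \<le> lam * g'' s + (1 - lam) * g'' (-s)"
      using convex_onD[OF conv, of "1 - lam" s "-s"] lam0 ins by simp
    have c2: "g'' ((1 - lam) * s + lam * (-s)) \<le> (1 - lam) * g'' s + lam * g'' (-s)"
      using convex_onD[OF conv, of lam s "-s"] lam0 ins by simp
    have "g'' t \<le> lam * g'' s + (1 - lam) * g'' (-s)" using c1 e1 by metis
    moreover have "g'' (-t) \<le> (1 - lam) * g'' s + lam * g'' (-s)" using c2 e2 by metis
    ultimately show ?thesis unfolding H''_def by (simp add: algebra_simps)
  qed
  have H'0: "H' 0 = 0" by (simp add: H'_def)
  have key: "H' t \<le> t * H'' t" if tt: "0 < t" "t < 1" for t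
  proof -
    obtain z where z: "0 < z" "z < t" "H' t - H' 0 = (t - 0) * H'' z"
    proof -
      have "\<exists>z. 0 < z \<and> z < t \<and> H' t - H' 0 = (t - 0) * H'' z"
        by (rule MVT2) (use tt dH' in auto)
      then show ?thesis using that by blast
    qed
    have "H'' z \<le> H'' t" using mono[of z t] z that by auto
    then show ?thesis using z H'0 that by (simp add: mult_left_mono)
  qed
  define m where "m t = H' t / t" for t
  have mmono: "m s \<le> m t" if "0 < s" "s \<le> t" "t < 1" for s t
  proof (rule DERIV_nonneg_imp_nondecreasing[OF that(2)])
    fix x assume x: "s \<le> x" "x \<le> t"
    then have x0: "0 < x" "x < 1" using that by auto
    have "(m has_real_derivative (H'' x * x - H' x) / x^2) (at x)"
      unfolding m_def[abs_def] using dH'[of x] x0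
      by (auto intro!: derivative_eq_intros simp: power2_eq_square)
    moreover have "(H'' x * x - H' x) / x^2 \<ge> 0" using key[OF x0] by (simp add: algebra_simps)
    ultimately show "\<exists>y. (m has_real_derivative y) (at x) \<and> 0 \<le> y" by blast
  qed
  define c where "c = H' a / (2*a)"
  define psi where "psi t = H t - c * t^2" for t
  have dpsi: "(psi has_real_derivative (H' t - 2 * c * t)) (at t)" if "t \<in> {-1<..<1}" for t
    unfolding psi_def[abs_def] using dH[OF that]
    by (auto intro!: derivative_eq_intros)
  have psiform: "H' t - 2 * c * t = t * (m t - m a)" if "t > 0" for t
    using that a0 by (simp add: c_def m_def field_simps)
  have pos: "psi a \<le> psi t" if "0 \<le> t" "t < 1" for t
  proof (cases "t \<le> a")
    case True
    show ?thesis
    proof (rule DERIV_nonpos_imp_nonincreasing[OF True])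
      fix x assume x: "t \<le> x" "x \<le> a"
      have "H' x - 2 * c * x \<le> 0"
      proof (cases "x = 0")
        case True then show ?thesis using H'0 by simp
      next
        case False
        then have "x > 0" using x that by auto
        then show ?thesis using psiform[of x] mmono[of x a] x a1 by (simp add: mult_nonneg_nonpos)
      qed
      then show "\<exists>y. (psi has_real_derivative y) (at x) \<and> y \<le> 0"
        using dpsi[of x] x that a1 by auto
    qed
  next
    case False
    have at: "a \<le> t" using False by simp
    show ?thesis
    proof (rule DERIV_nonneg_imp_nondecreasing[OF at])
      fix x assume x: "a \<le> x" "x \<le> t"
      have "x > 0" using x a0 by auto
      then have "H' x - 2 * c * x \<ge> 0"
        using psiform[of x] mmono[of a x] x a0 that by simp
      then show "\<exists>y. (psi has_real_derivative y) (at x) \<and> y \<ge> 0"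
        using dpsi[of x] x that a0 by auto
    qed
  qed
  show ?thesis
  proof
    fix t :: real assume t: "t \<in> {-1<..<1}"
    have "psi a \<le> psi \<bar>t\<bar>" using pos[of "\<bar>t\<bar>"] t by auto
    moreover have "psi \<bar>t\<bar> = psi t"
      by (cases "t \<ge> 0") (auto simp: psi_def H_def)
    ultimately have "psi a \<le> psi t" by simp
    then have "H a + c * (t^2 - a^2) \<le> H t" by (simp add: psi_def algebra_simps)
    then show "G t + G (-t) \<ge> (G a + G (-a)) + (g' a - g' (-a)) / (2*a) * (t^2 - a^2)"
      unfolding H_def c_def H'_def by simp
  qed
qed


lemma potential_cross:
  fixes g :: "real \<Rightarrow> ereal" and x :: "real ^ 'n"
  shows "potential g cross_polytope x = (\<Sum>i\<in>UNIV. g (x $ i) + g (- (x $ i)))"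
proof -
  have cp: "cross_polytope = (\<lambda>i. axis i (1::real)) ` UNIV \<union> (\<lambda>i. axis i (-1::real)) ` UNIV"
    unfolding cross_polytope_def by auto
  have disj: "(\<lambda>i. axis i (1::real)) ` UNIV \<inter> (\<lambda>i. axis i (-1::real)) ` UNIV = {}"
    by (auto simp: axis_eq_axis)
  have inj1: "inj_on (\<lambda>i. axis i (1::real)) UNIV" by (auto simp: inj_on_def axis_eq_axis)
  have inj2: "inj_on (\<lambda>i. axis i (-1::real)) UNIV" by (auto simp: inj_on_def axis_eq_axis)
  have "potential g cross_polytope x = (\<Sum>y\<in>(\<lambda>i. axis i (1::real)) ` UNIV. g (x \<bullet> y)) + (\<Sum>y\<in>(\<lambda>i. axis i (-1::real)) ` UNIV. g (x \<bullet> y))"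
    unfolding potential_def cp by (rule sum.union_disjoint) (use disj in auto)
  also have "\<dots> = (\<Sum>i\<in>UNIV. g (x $ i)) + (\<Sum>i\<in>UNIV. g (- (x $ i)))"
    by (simp add: sum.reindex[OF inj1] sum.reindex[OF inj2] inner_axis)
  also have "\<dots> = (\<Sum>i\<in>UNIV. g (x $ i) + g (- (x $ i)))"
    by (simp add: sum.distrib)
  finally show ?thesis .
qed

theorem theorem5p1:
  fixes g :: "real \<Rightarrow> ereal"
  assumes d2: "CARD('n::finite) \<ge> 2"
    and no_minf: "\<forall>t\<in>{-1..1}. g t \<noteq> -\<infinity>"
    and finite_g: "\<forall>t\<in>{-1..<1}. g t \<noteq> \<infinity>"
    and cont: "continuous_on {-1..<1} (\<lambda>t. real_of_ereal (g t))"
    and diff: "(\<lambda>t. real_of_ereal (g t)) differentiable_on {-1<..<1}"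
    and g1: "(g \<longlongrightarrow> g 1) (at_left 1)"
    and g2: "\<exists>g' g''. (\<forall>t\<in>{-1<..<1}.
                ((\<lambda>s. real_of_ereal (g s)) has_real_derivative g' t) (at t) \<and>
                (g' has_real_derivative g'' t) (at t))
              \<and> convex_on {-1<..<1} g''"
  shows "(\<forall>x::real^'n. (\<forall>i. \<bar>x $ i\<bar> = 1 / sqrt (real CARD('n))) \<longrightarrow>
            (\<forall>z\<in>sphere (0::real^'n) 1. potential g cross_polytope x \<le> potential g cross_polytope z))
         \<and> (INF z\<in>sphere (0::real^'n) 1. potential g cross_polytope z)
             = ereal (real CARD('n)) * (g (1 / sqrt (real CARD('n))) + g (- 1 / sqrt (real CARD('n))))"
proof -
  define d where "d = real CARD('n)"
  define a where "a = 1 / sqrt d"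
  define G where "G t = real_of_ereal (g t)" for t
  have d0: "d \<ge> 2" using d2 unfolding d_def by simp
  have a0: "0 < a" using d0 by (simp add: a_def)
  have sqd: "sqrt d > 1" using d0 by simp
  have a1: "a < 1" using sqd by (simp add: a_def)
  have da: "d * a^2 = 1" using d0 by (simp add: a_def power_divide)
  obtain g' g'' where D: "\<forall>t\<in>{-1<..<1}. (G has_real_derivative g' t) (at t) \<and> (g' has_real_derivative g'' t) (at t)"
    and conv: "convex_on {-1<..<1} g''"
    using g2 unfolding G_def[abs_def] by blast
  define C where "C = (g' a - g' (-a)) / (2*a)"
  define L where "L t = (G a + G (-a)) + C * (t^2 - a^2)" for t
  have keyr: "L t \<le> G t + G (-t)" if "t \<in> {-1<..<1}" for t
    using key_real[OF D conv a0 a1] that unfolding L_def C_def by blast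
  have fin: "g t = ereal (G t)" if "t \<in> {-1..<1}" for t
    using no_minf finite_g that unfolding G_def by (cases "g t") auto
  have Lsym: "L (-t) = L t" for t by (simp add: L_def)
  have edge: "ereal (L 1) \<le> g 1 + g (-1)"
  proof -
    have c1: "continuous_on {0..1} (\<lambda>t. G (-t))"
      by (rule continuous_on_compose2[OF cont[unfolded G_def[symmetric]]]) (auto intro!: continuous_intros)
    have "((\<lambda>t. G (-t)) \<longlongrightarrow> G (-1)) (at 1 within {0..1})"
      using c1 unfolding continuous_on_def by auto
    moreover have "at (1::real) within {0..1} = at_left 1"
      by (rule at_within_Icc_at_left) simp
    ultimately have lG: "((\<lambda>t. G (-t)) \<longlongrightarrow> G (-1)) (at_left 1)"
      by simp
    have lL: "(L \<longlongrightarrow> L 1) (at_left 1)"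
      unfolding L_def[abs_def] by (intro tendsto_intros)
    have lim1: "((\<lambda>t. ereal (L t - G (-t))) \<longlongrightarrow> ereal (L 1 - G (-1))) (at_left 1)"
      by (intro tendsto_intros lL lG)
    have ev: "eventually (\<lambda>t. ereal (L t - G (-t)) \<le> g t) (at_left 1)"
    proof -
      have "eventually (\<lambda>t. t \<in> {0<..<(1::real)}) (at_left 1)"
        by (rule eventually_at_left_real) simp
      then show ?thesis
      proof (rule eventually_mono)
        fix t :: real assume t: "t \<in> {0<..<1}"
        then have "L t \<le> G t + G (-t)" using keyr by auto
        then show "ereal (L t - G (-t)) \<le> g t" using fin[of t] t by simp
      qed
    qed
    have "ereal (L 1 - G (-1)) \<le> g 1"
      by (rule tendsto_le[OF trivial_limit_at_left_real g1 lim1 ev])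
    moreover have "g (-1) = ereal (G (-1))" using fin[of "-1"] by simp
    ultimately show ?thesis by (cases "g 1") auto
  qed
  have bound: "ereal (L t) \<le> g t + g (-t)" if tI: "t \<in> {-1..1}" for t
  proof -
    consider "t = 1" | "t = -1" | "t \<in> {-1<..<1}" using tI by fastforce
    then show ?thesis
    proof cases
      case 1 then show ?thesis using edge by simp
    next
      case 2 then show ?thesis using edge Lsym[of 1] by (simp add: add.commute)
    next
      case 3
      then have "g t + g (-t) = ereal (G t + G (-t))" using fin[of t] fin[of "-t"] by auto
      then show ?thesis using keyr[OF 3] by simp
    qed
  qed
  define V where "V = ereal (d * (G a + G (-a)))"
  have lower: "V \<le> potential g cross_polytope z" if z: "z \<in> sphere (0::real^'n) 1" for z
  proof -
    have nz: "norm z = 1" using z by simp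
    have s1: "(\<Sum>i\<in>UNIV. z $ i ^ 2) = 1"
      using dot_square_norm[of z] nz by (simp add: inner_vec_def power2_eq_square)
    have "(\<Sum>i\<in>UNIV. L (z $ i)) = d * (G a + G (-a)) + C * ((\<Sum>i\<in>UNIV. z $ i ^ 2) - d * a^2)"
      by (simp add: L_def sum.distrib sum_distrib_left sum_subtractf d_def algebra_simps)
    then have sL: "(\<Sum>i\<in>UNIV. L (z $ i)) = d * (G a + G (-a))" using s1 da by simp
    have "(\<Sum>i\<in>UNIV. ereal (L (z $ i))) \<le> (\<Sum>i\<in>UNIV. g (z $ i) + g (- (z $ i)))"
    proof (rule sum_mono)
      fix i
      have "\<bar>z $ i\<bar> \<le> 1" using component_le_norm_cart[of z i] nz by simp
      then have "z $ i \<in> {-1..1}" by (auto simp: abs_le_iff)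
      then show "ereal (L (z $ i)) \<le> g (z $ i) + g (- (z $ i))" by (rule bound)
    qed
    then show ?thesis unfolding potential_cross V_def using sL by simp
  qed
  have ga: "g a + g (-a) = ereal (G a + G (-a))" using fin[of a] fin[of "-a"] a0 a1 by auto
  have atx: "potential g cross_polytope x = V" if x: "\<forall>i. \<bar>x $ i\<bar> = a" for x :: "real^'n"
  proof -
    have "g (x $ i) + g (- (x $ i)) = ereal (G a + G (-a))" for i
    proof -
      have h: "\<bar>x $ i\<bar> = a" using x by blast
      show ?thesis
      proof (cases "x $ i \<ge> 0")
      case True then have "x $ i = a" using h by simp
      then show ?thesis using ga by simp
    next
      case False then have "x $ i = -a" using h by linarith
      then show ?thesis using ga by (simp add: add.commute)
    qed
    qed
    then show ?thesis unfolding potential_cross V_def by (simp add: d_def)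
  qed
  define x0 :: "real^'n" where "x0 = (\<chi> i. a)"
  have x0abs: "\<forall>i. \<bar>x0 $ i\<bar> = a" using a0 by (simp add: x0_def)
  have x0s: "x0 \<in> sphere (0::real^'n) 1"
  proof -
    have "x0 \<bullet> x0 = (\<Sum>i\<in>(UNIV::'n set). a * a)" by (simp add: inner_vec_def x0_def)
    also have "\<dots> = d * a^2" by (simp add: d_def power2_eq_square)
    also have "\<dots> = 1" by (rule da)
    finally have "norm x0 = 1" by (simp add: norm_eq_sqrt_inner)
    then show ?thesis by simp
  qed
  have Vval: "V = ereal (real CARD('n)) * (g (1 / sqrt (real CARD('n))) + g (- 1 / sqrt (real CARD('n))))"
  proof -
    have "g (1 / sqrt (real CARD('n))) + g (- 1 / sqrt (real CARD('n))) = g a + g (-a)"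
      by (simp add: a_def d_def)
    then show ?thesis using ga by (simp add: V_def d_def)
  qed
  have inf: "(INF z\<in>sphere (0::real^'n) 1. potential g cross_polytope z) = V"
  proof (rule antisym)
    show "(INF z\<in>sphere (0::real^'n) 1. potential g cross_polytope z) \<le> V"
      using atx[OF x0abs] x0s by (metis INF_lower)
    show "V \<le> (INF z\<in>sphere (0::real^'n) 1. potential g cross_polytope z)"
      using lower by (rule INF_greatest)
  qed
  show ?thesis
  proof
    show "\<forall>x::real^'n. (\<forall>i. \<bar>x $ i\<bar> = 1 / sqrt (real CARD('n))) \<longrightarrow>
            (\<forall>z\<in>sphere (0::real^'n) 1. potential g cross_polytope x \<le> potential g cross_polytope z)"
      using atx lower unfolding a_def d_def by simp
    show "(INF z\<in>sphere (0::real^'n) 1. potential g cross_polytope z)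
             = ereal (real CARD('n)) * (g (1 / sqrt (real CARD('n))) + g (- 1 / sqrt (real CARD('n))))"
      using inf Vval by simp
  qed
qed

end
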